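(* Define, for integers $n,m,p\ge0$, $$\mathcal{Z}_{n,m}(p)=\binom{m+p}{p}\sum_{k=0}^{m}s(m,k)\,\mathcal{B}_{n+k,p}.$$ Then for all integers $n,m,p\ge0$, $$\mathcal{Z}_{n+1,m}(p)=\frac{m+1}{m+p+1}\,\mathcal{Z}_{n,m+1}(p)+m\,\mathcal{Z}_{n,m}(p),$$ and $\mathcal{Z}_{0,m}(p)=1$, $\mathcal{Z}_{n,0}(p)=\mathcal{B}_{n,p}$.
   Context: $s(m,k)$ are the signed Stirling numbers of the first kind, defined by $x(x-1)\cdots(x-m+1)=\sum_{k=0}^m s(m,k)x^k$. For an integer $p\ge0$, the $p$-Bell numbers $\mathcal{B}_{n,p}$ are defined by $\sum_{n\ge0}\mathcal{B}_{n,p}\frac{z^n}{n!}=\sum_{n\ge0}\binom{n+p}{p}^{-1}\frac{(e^z-1)^n}{n!}$. *)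

theory Defs
  imports "HOL-Computational_Algebra.Computational_Algebra"
begin

definition stirling1s :: "nat \<Rightarrow> nat \<Rightarrow> int" where
  "stirling1s m k = coeff (\<Prod>i<m. [:- int i, 1:]) k"

text \<open>p-Bell numbers, defined by extracting the coefficient of z^n/n! from the
  exponential generating function sum_j binom(j+p,p)^(-1) (e^z-1)^j/j!.
  The series (e^z-1)^j has order j, so only the terms j \<le> n contribute to the
  n-th coefficient; the sum is therefore taken over j \<le> n.\<close>
definition pBell :: "nat \<Rightarrow> nat \<Rightarrow> real" where
  "pBell n p = fact n * (\<Sum>j\<le>n. fps_nth ((fps_exp 1 - 1) ^ j) n
                     / (fact j * real ((j + p) choose p)))"

definition Zp :: "nat \<Rightarrow> nat \<Rightarrow> nat \<Rightarrow> real" where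
  "Zp n m p = real ((m + p) choose p) * (\<Sum>k\<le>m. real_of_int (stirling1s m k) * pBell (n + k) p)"

end

theory Submission
  imports Defs
begin

lemma neg1pow: "(-1 :: real fps) ^ k = fps_const ((-1) ^ k)"
  by (induction k) (simp_all add: fps_const_neg[symmetric] fps_const_mult[symmetric] del: fps_const_neg)

lemma term_eq: "of_nat c * fps_exp (1::real) ^ i * (-1) ^ k = fps_const (real c * (-1) ^ k) * fps_exp (real i)"
proof -
  have "of_nat c * fps_exp (1::real) ^ i * (-1) ^ k = fps_const (real c) * fps_exp (real i) * fps_const ((-1) ^ k)"
    by (simp add: fps_exp_power_mult fps_of_nat neg1pow)
  also have "\<dots> = fps_const (real c * (-1) ^ k) * fps_exp (real i)"
    by (simp add: fps_const_mult[symmetric] mult_ac del: fps_const_mult)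
  finally show ?thesis .
qed

lemma exp_pow_expand:
  "(fps_exp (1::real) - 1) ^ j = (\<Sum>i\<le>j. fps_const (real (j choose i) * (-1) ^ (j - i)) * fps_exp (real i))"
proof -
  have "(fps_exp (1::real) - 1) ^ j = (fps_exp 1 + (-1)) ^ j" by simp
  also have "\<dots> = (\<Sum>i\<le>j. of_nat (j choose i) * fps_exp 1 ^ i * (-1) ^ (j - i))"
    by (rule binomial_ring)
  also have "\<dots> = (\<Sum>i\<le>j. fps_const (real (j choose i) * (-1) ^ (j - i)) * fps_exp (real i))"
    by (intro sum.cong refl term_eq)
  finally show ?thesis .
qed

lemma coeff_formula:
  "fact k * ((fps_exp (1::real) - 1) ^ j $ k) = (\<Sum>i\<le>j. real (j choose i) * (-1) ^ (j - i) * real i ^ k)"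
  by (simp add: exp_pow_expand fps_sum_nth sum_distrib_left)

lemma coeff_zero: "k < j \<Longrightarrow> (fps_exp (1::real) - 1) ^ j $ k = 0"
  using startsby_zero_power_prefix[of "fps_exp (1::real) - 1" j] by simp

lemma s_zero: "stirling1s 0 k = (if k = 0 then 1 else 0)"
  by (simp add: stirling1s_def)

lemma s_suc: "stirling1s (Suc m) k = - int m * stirling1s m k + (case k of 0 \<Rightarrow> 0 | Suc k' \<Rightarrow> stirling1s m k')"
proof -
  have "(\<Prod>i<Suc m. [:- int i, 1:]) = (\<Prod>i<m. [:- int i, 1:]) * pCons (- int m) [:1:]"
    by simp
  also have "\<dots> = smult (- int m) (\<Prod>i<m. [:- int i, 1:]) + pCons 0 (\<Prod>i<m. [:- int i, 1:])"
    by (simp add: mult_pCons_right)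
  finally show ?thesis by (simp add: stirling1s_def coeff_pCons split: nat.split)
qed

lemma s_big: "m < k \<Longrightarrow> stirling1s m k = 0"
proof (induction m arbitrary: k)
  case 0 then show ?case by (simp add: s_zero)
next
  case (Suc m) then show ?case by (simp add: s_suc split: nat.split)
qed

lemma shift_rec:
  fixes f :: "nat \<Rightarrow> real"
  shows "(\<Sum>k\<le>Suc m. real_of_int (stirling1s (Suc m) k) * f k)
     = - real m * (\<Sum>k\<le>m. real_of_int (stirling1s m k) * f k) + (\<Sum>k\<le>m. real_of_int (stirling1s m k) * f (Suc k))"
proof -
  have "(\<Sum>k\<le>Suc m. real_of_int (stirling1s (Suc m) k) * f k)
      = (\<Sum>k\<le>Suc m. - real m * (real_of_int (stirling1s m k) * f k))
        + (\<Sum>k\<le>Suc m. real_of_int (case k of 0 \<Rightarrow> 0 | Suc k' \<Rightarrow> stirling1s m k') * f k)"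
    by (simp add: s_suc sum.distrib[symmetric] algebra_simps)
  also have "(\<Sum>k\<le>Suc m. - real m * (real_of_int (stirling1s m k) * f k))
      = - real m * (\<Sum>k\<le>m. real_of_int (stirling1s m k) * f k)"
    by (simp add: s_big sum_distrib_left)
  also have "(\<Sum>k\<le>Suc m. real_of_int (case k of 0 \<Rightarrow> 0 | Suc k' \<Rightarrow> stirling1s m k') * f k)
      = (\<Sum>k\<le>m. real_of_int (stirling1s m k) * f (Suc k))"
    by (subst sum.atMost_Suc_shift) simp
  finally show ?thesis .
qed

lemma F_prod: "(\<Sum>k\<le>m. real_of_int (stirling1s m k) * x ^ k) = (\<Prod>l<m. x - real l)"
proof (induction m)
  case 0 then show ?case by (simp add: s_zero)
next
  case (Suc m)
  have "(\<Sum>k\<le>m. real_of_int (stirling1s m k) * x ^ Suc k) = x * (\<Sum>k\<le>m. real_of_int (stirling1s m k) * x ^ k)"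
    by (simp add: sum_distrib_left mult_ac)
  then show ?case using shift_rec[of m "\<lambda>k. x ^ k"] Suc by (simp add: algebra_simps)
qed

lemma prod_fact: "(\<Prod>l<m. real m - real l) = fact m"
proof -
  have "(\<Prod>l<m. real m - real l) = (\<Prod>l<m. real (m - l))"
    by (intro prod.cong refl) (simp add: of_nat_diff)
  also have "\<dots> = fact m" by (simp add: fact_prod_rev atLeast0LessThan)
  finally show ?thesis .
qed

lemma prod_zero: "i < m \<Longrightarrow> (\<Prod>l<m. real i - real l) = 0"
  by (rule prod_zero) auto

lemma inner: "j \<le> m \<Longrightarrow> (\<Sum>k\<le>m. real_of_int (stirling1s m k) * (fact k * ((fps_exp (1::real) - 1) ^ j $ k)))
   = (if j = m then fact m else 0)"
proof -
  assume jm: "j \<le> m"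
  have "(\<Sum>k\<le>m. real_of_int (stirling1s m k) * (fact k * ((fps_exp (1::real) - 1) ^ j $ k)))
      = (\<Sum>k\<le>m. \<Sum>i\<le>j. real (j choose i) * (-1) ^ (j - i) * (real_of_int (stirling1s m k) * real i ^ k))"
    by (simp add: coeff_formula sum_distrib_left mult_ac)
  also have "\<dots> = (\<Sum>i\<le>j. real (j choose i) * (-1) ^ (j - i) * (\<Prod>l<m. real i - real l))"
    by (subst sum.swap) (simp add: sum_distrib_left[symmetric] F_prod)
  also have "\<dots> = (if j = m then fact m else 0)"
  proof (cases "j = m")
    case True
    have "(\<Sum>i\<le>m. real (m choose i) * (-1) ^ (m - i) * (\<Prod>l<m. real i - real l))
        = (\<Sum>i\<in>insert m {..<m}. real (m choose i) * (-1) ^ (m - i) * (\<Prod>l<m. real i - real l))"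
      by (simp add: lessThan_Suc_atMost[symmetric] atLeast0LessThan)
    also have "\<dots> = fact m"
      by (subst sum.insert) (auto simp: prod_fact prod_zero)
    finally show ?thesis using True by simp
  next
    case False
    then show ?thesis using jm by (auto intro!: sum.neutral simp: prod_zero)
  qed
  finally show ?thesis .
qed

lemma G_zero: "(\<Sum>k\<le>m. real_of_int (stirling1s m k) * pBell k p) = 1 / real ((m + p) choose p)"
proof -
  define a where "a = (\<lambda>j k. (fps_exp (1::real) - 1) ^ j $ k)"
  define C where "C = (\<lambda>j. fact j * real ((j + p) choose p))"
  have Cpos: "C j \<noteq> 0" for j unfolding C_def by simp
  have ext: "pBell k p = (\<Sum>j\<le>m. fact k * a j k / C j)" if "k \<le> m" for k
  proof -
    have "pBell k p = (\<Sum>j\<le>k. fact k * a j k / C j)"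
      by (simp add: pBell_def a_def C_def sum_distrib_left)
    also have "\<dots> = (\<Sum>j\<le>m. fact k * a j k / C j)"
      by (rule sum.mono_neutral_left) (use that in \<open>auto simp: a_def coeff_zero\<close>)
    finally show ?thesis .
  qed
  have "(\<Sum>k\<le>m. real_of_int (stirling1s m k) * pBell k p)
      = (\<Sum>k\<le>m. \<Sum>j\<le>m. real_of_int (stirling1s m k) * (fact k * a j k) / C j)"
    by (intro sum.cong refl) (simp add: ext sum_distrib_left)
  also have "\<dots> = (\<Sum>j\<le>m. (\<Sum>k\<le>m. real_of_int (stirling1s m k) * (fact k * a j k)) / C j)"
    by (subst sum.swap) (simp add: sum_divide_distrib)
  also have "\<dots> = (\<Sum>j\<le>m. (if j = m then fact m / C m else 0))"
    by (intro sum.cong refl) (simp add: a_def inner)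
  also have "\<dots> = 1 / real ((m + p) choose p)"
    by (simp add: C_def)
  finally show ?thesis .
qed

lemma binom_ratio: "real ((m + p) choose p) = real (m + 1) / real (m + p + 1) * real ((m + 1 + p) choose p)"
proof -
  have "Suc (m + p) * ((m + p) choose m) = (Suc (m + p) choose Suc m) * Suc m"
    by (rule Suc_times_binomial_eq)
  moreover have "(m + p) choose m = (m + p) choose p"
    by (metis add_diff_cancel_left' binomial_symmetric le_add1)
  moreover have "Suc (m + p) choose Suc m = (m + 1 + p) choose p"
    by (metis add_Suc add_diff_cancel_left' binomial_symmetric le_add1 plus_1_eq_Suc add.commute)
  ultimately have "real (m + p + 1) * real ((m + p) choose p) = real ((m + 1 + p) choose p) * real (m + 1)"
    by (metis Suc_eq_plus1 of_nat_mult)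
  then show ?thesis by (simp add: field_simps)
qed

theorem mainTheorem9:
  fixes n m p :: nat
  shows "Zp (n + 1) m p = real (m + 1) / real (m + p + 1) * Zp n (m + 1) p + real m * Zp n m p
         \<and> Zp 0 m p = 1
         \<and> Zp n 0 p = pBell n p"
proof (intro conjI)
  have rec: "(\<Sum>k\<le>Suc m. real_of_int (stirling1s (Suc m) k) * pBell (n + k) p)
     = - real m * (\<Sum>k\<le>m. real_of_int (stirling1s m k) * pBell (n + k) p) + (\<Sum>k\<le>m. real_of_int (stirling1s m k) * pBell (Suc n + k) p)"
    using shift_rec[of m "\<lambda>k. pBell (n + k) p"] by simp
  show "Zp (n + 1) m p = real (m + 1) / real (m + p + 1) * Zp n (m + 1) p + real m * Zp n m p"
  proof -
    define G0 where "G0 = (\<Sum>k\<le>m. real_of_int (stirling1s m k) * pBell (n + k) p)"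
    define G0' where "G0' = (\<Sum>k\<le>m. real_of_int (stirling1s m k) * pBell (Suc n + k) p)"
    define G1 where "G1 = (\<Sum>k\<le>Suc m. real_of_int (stirling1s (Suc m) k) * pBell (n + k) p)"
    define r where "r = real (m + 1) / real (m + p + 1)"
    have z0: "Zp (n + 1) m p = real ((m + p) choose p) * G0'" by (simp add: Zp_def G0'_def)
    have z1: "Zp n (m + 1) p = real ((m + 1 + p) choose p) * G1" by (simp add: Zp_def G1_def)
    have z2: "Zp n m p = real ((m + p) choose p) * G0" by (simp add: Zp_def G0_def)
    have g: "G1 = - real m * G0 + G0'" using rec by (simp add: G0_def G0'_def G1_def)
    have b: "real ((m + p) choose p) = r * real ((m + 1 + p) choose p)" using binom_ratio[of m p] by (simp add: r_def)
    show ?thesis unfolding z0 z1 z2 g r_def[symmetric] b by (simp add: algebra_simps)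
  qed
  show "Zp 0 m p = 1" unfolding Zp_def using G_zero[of m p] by simp
  show "Zp n 0 p = pBell n p" unfolding Zp_def by (simp add: s_zero)
qed

end
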